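(* Let $c_0\neq 0$ and $c_1$ be real constants and consider the Newtonian system in the Euclidean plane $\ddot x=-\partial_x V_1$, $\ddot y=-\partial_y V_1$ with potential $V_1(x,y)=c_0(x^2+9y^2)+c_1y$. Then $$J_1=(x\dot y-y\dot x)\dot x^2-\frac{c_1}{18c_0}\dot x^3+\frac{c_1}{3}x^2\dot x+6c_0x^2y\dot x-\frac{2c_0}{3}x^3\dot y$$ is constant along every solution. *)

theory Defs
  imports "HOL-Analysis.Analysis"
begin

definition V1 :: "real \<Rightarrow> real \<Rightarrow> real \<Rightarrow> real \<Rightarrow> real" where
  "V1 c0 c1 x y = c0 * (x^2 + 9 * y^2) + c1 * y"

definition J1 :: "real \<Rightarrow> real \<Rightarrow> real \<Rightarrow> real \<Rightarrow> real \<Rightarrow> real \<Rightarrow> real" where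
  "J1 c0 c1 x y vx vy =
     (x * vy - y * vx) * vx^2 - c1 / (18 * c0) * vx^3 + c1 / 3 * x^2 * vx
     + 6 * c0 * x^2 * y * vx - 2 * c0 / 3 * x^3 * vy"

end

theory Submission
  imports Defs
begin

lemma dV1x: "deriv (\<lambda>u. V1 c0 c1 u b) a = 2 * c0 * a"
  unfolding V1_def
  by (rule DERIV_imp_deriv) (auto intro!: derivative_eq_intros)

lemma dV1y: "deriv (\<lambda>v. V1 c0 c1 a v) b = 18 * c0 * b + c1"
  unfolding V1_def
  by (rule DERIV_imp_deriv) (auto intro!: derivative_eq_intros)

theorem mainTheorem4:
  fixes c0 c1 :: real
    and I :: "real set"
    and x y vx vy :: "real \<Rightarrow> real"
  assumes c0: "c0 \<noteq> 0"
    and I: "is_interval I"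
    and dx: "\<And>t. t \<in> I \<Longrightarrow> (x has_real_derivative vx t) (at t within I)"
    and dy: "\<And>t. t \<in> I \<Longrightarrow> (y has_real_derivative vy t) (at t within I)"
    and ddx: "\<And>t. t \<in> I \<Longrightarrow>
       (vx has_real_derivative (- deriv (\<lambda>u. V1 c0 c1 u (y t)) (x t))) (at t within I)"
    and ddy: "\<And>t. t \<in> I \<Longrightarrow>
       (vy has_real_derivative (- deriv (\<lambda>v. V1 c0 c1 (x t) v) (y t))) (at t within I)"
  shows "\<forall>s\<in>I. \<forall>t\<in>I. J1 c0 c1 (x s) (y s) (vx s) (vy s) = J1 c0 c1 (x t) (y t) (vx t) (vy t)"
proof -
  have "\<exists>c. \<forall>t\<in>I. J1 c0 c1 (x t) (y t) (vx t) (vy t) = c"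
  proof (rule has_field_derivative_zero_constant)
    show "convex I" using I by (rule is_interval_convex)
  next
    fix t assume t: "t \<in> I"
    have ax: "(vx has_real_derivative (- (2 * c0 * x t))) (at t within I)"
      using ddx[OF t] by (simp add: dV1x)
    have ay: "(vy has_real_derivative (- (18 * c0 * y t + c1))) (at t within I)"
      using ddy[OF t] by (simp add: dV1y)
    have "((\<lambda>t. J1 c0 c1 (x t) (y t) (vx t) (vy t)) has_real_derivative
      ((vx t * vy t + x t * (- (18 * c0 * y t + c1)) - vy t * vx t - y t * (- (2 * c0 * x t))) * (vx t)^2
       + (x t * vy t - y t * vx t) * (2 * vx t * (- (2 * c0 * x t)))
       - c1 / (18 * c0) * (3 * (vx t)^2 * (- (2 * c0 * x t)))
       + c1 / 3 * (2 * x t * vx t * vx t + (x t)^2 * (- (2 * c0 * x t)))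
       + 6 * c0 * (2 * x t * vx t * y t * vx t + (x t)^2 * vy t * vx t + (x t)^2 * y t * (- (2 * c0 * x t)))
       - 2 * c0 / 3 * (3 * (x t)^2 * vx t * vy t + (x t)^3 * (- (18 * c0 * y t + c1)))))
      (at t within I)"
      unfolding J1_def
      by (rule derivative_eq_intros dx[OF t] dy[OF t] ax ay refl | simp)+
         (use c0 in \<open>simp add: field_simps power2_eq_square power3_eq_cube\<close>; simp add: divide_simps; algebra)
    moreover have "((vx t * vy t + x t * (- (18 * c0 * y t + c1)) - vy t * vx t - y t * (- (2 * c0 * x t))) * (vx t)^2
       + (x t * vy t - y t * vx t) * (2 * vx t * (- (2 * c0 * x t)))
       - c1 / (18 * c0) * (3 * (vx t)^2 * (- (2 * c0 * x t)))
       + c1 / 3 * (2 * x t * vx t * vx t + (x t)^2 * (- (2 * c0 * x t)))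
       + 6 * c0 * (2 * x t * vx t * y t * vx t + (x t)^2 * vy t * vx t + (x t)^2 * y t * (- (2 * c0 * x t)))
       - 2 * c0 / 3 * (3 * (x t)^2 * vx t * vy t + (x t)^3 * (- (18 * c0 * y t + c1)))) = 0"
    proof -
      have k: "c1 / (18 * c0) * (3 * (vx t)^2 * (- (2 * c0 * x t))) = - (c1 / 3 * x t * (vx t)^2)"
        using c0 by (simp add: field_simps)
      show ?thesis unfolding k by (simp add: algebra_simps power2_eq_square power3_eq_cube)
    qed
    ultimately show "((\<lambda>t. J1 c0 c1 (x t) (y t) (vx t) (vy t)) has_field_derivative 0) (at t within I)"
      by (metis (no_types, lifting))
  qed
  then show ?thesis by auto
qed

end
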